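(* Let $n\ge1$ and let $D$ be the set of all linear orders $q$ on $[n]$ such that for every triple $i<j<k$ in $[n]$, $i$ is not ranked last among $\{i,j,k\}$ in $q$ and $k$ is not ranked first among $\{i,j,k\}$ in $q$. Then $|D|=F_{n+1}$, where $F_1=F_2=1$ and $F_{m}=F_{m-1}+F_{m-2}$ are the Fibonacci numbers.
   Context: Linear orders on $[n]$ are rankings of the alternatives $1,\dots,n$; "ranked last/first among $\{i,j,k\}$" refers to the restriction of the order to these three alternatives. *)

theory Defs
  imports Main "HOL-Number_Theory.Fib"
begin

text \<open>A linear order q on [n] = {1..n} is a relation q with linear_order_on {1..n} q;
  (a,b) \<in> q means a is ranked at or before (above) b.\<close>

definition ranked_last :: "(nat \<times> nat) set \<Rightarrow> nat \<Rightarrow> nat \<Rightarrow> nat \<Rightarrow> bool" where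
  "ranked_last q x y z \<longleftrightarrow> (y, x) \<in> q \<and> (z, x) \<in> q"

definition ranked_first :: "(nat \<times> nat) set \<Rightarrow> nat \<Rightarrow> nat \<Rightarrow> nat \<Rightarrow> bool" where
  "ranked_first q x y z \<longleftrightarrow> (x, y) \<in> q \<and> (x, z) \<in> q"

definition D_set :: "nat \<Rightarrow> (nat \<times> nat) set set" where
  "D_set n = {q. linear_order_on {1..n} q \<and>
     (\<forall>i j k. 1 \<le> i \<and> i < j \<and> j < k \<and> k \<le> n \<longrightarrow>
        \<not> ranked_last q i j k \<and> \<not> ranked_first q k i j)}"

end

theory Submission
  imports Defs
begin

lemma lin_iff: "linear_order_on A q \<longleftrightarrow> q \<subseteq> A \<times> A \<and> (\<forall>x\<in>A. (x,x)\<in>q) \<and>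
   (\<forall>x y z. (x,y)\<in>q \<longrightarrow> (y,z)\<in>q \<longrightarrow> (x,z)\<in>q) \<and>
   (\<forall>x y. (x,y)\<in>q \<longrightarrow> (y,x)\<in>q \<longrightarrow> x = y) \<and>
   (\<forall>x\<in>A. \<forall>y\<in>A. x \<noteq> y \<longrightarrow> (x,y)\<in>q \<or> (y,x)\<in>q)"
  unfolding linear_order_on_def partial_order_on_def preorder_on_def refl_on_def trans_def
    antisym_def total_on_def by blast

lemma sub_iff: "(q \<subseteq> {1..n} \<times> {1..(n::nat)}) \<longleftrightarrow> (\<forall>x y. (x,y)\<in>q \<longrightarrow> 1 \<le> x \<and> x \<le> n \<and> 1 \<le> y \<and> y \<le> n)"
  by auto

lemma refl_iff: "(\<forall>x\<in>{1..n}. (x,x)\<in>q) \<longleftrightarrow> (\<forall>x. 1 \<le> x \<and> x \<le> (n::nat) \<longrightarrow> (x,x)\<in>q)"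
  by auto

lemma tot_iff: "(\<forall>x\<in>{1..n}. \<forall>y\<in>{1..n}. x \<noteq> y \<longrightarrow> (x,y)\<in>q \<or> (y,x)\<in>q) \<longleftrightarrow>
   (\<forall>x y. 1 \<le> x \<and> x \<le> (n::nat) \<longrightarrow> 1 \<le> y \<and> y \<le> n \<longrightarrow> x \<noteq> y \<longrightarrow> (x,y)\<in>q \<or> (y,x)\<in>q)"
  unfolding Ball_def atLeastAtMost_iff by blast

lemma D_iff: "q \<in> D_set n \<longleftrightarrow> (\<forall>x y. (x,y)\<in>q \<longrightarrow> 1 \<le> x \<and> x \<le> n \<and> 1 \<le> y \<and> y \<le> n) \<and>
   (\<forall>x. 1 \<le> x \<and> x \<le> n \<longrightarrow> (x,x)\<in>q) \<and>
   (\<forall>x y z. (x,y)\<in>q \<longrightarrow> (y,z)\<in>q \<longrightarrow> (x,z)\<in>q) \<and>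
   (\<forall>x y. (x,y)\<in>q \<longrightarrow> (y,x)\<in>q \<longrightarrow> x = y) \<and>
   (\<forall>x y. 1 \<le> x \<and> x \<le> n \<longrightarrow> 1 \<le> y \<and> y \<le> n \<longrightarrow> x \<noteq> y \<longrightarrow> (x,y)\<in>q \<or> (y,x)\<in>q) \<and>
   (\<forall>i j k. 1 \<le> i \<and> i < j \<and> j < k \<and> k \<le> n \<longrightarrow>
        \<not> ((j,i)\<in>q \<and> (k,i)\<in>q) \<and> \<not> ((k,i)\<in>q \<and> (k,j)\<in>q))"
  unfolding D_set_def lin_iff ranked_last_def ranked_first_def sub_iff refl_iff tot_iff mem_Collect_eq
  by (simp only: conj_assoc)

lemma DE_sub: "q \<in> D_set n \<Longrightarrow> (x,y)\<in>q \<Longrightarrow> 1 \<le> x \<and> x \<le> n \<and> 1 \<le> y \<and> y \<le> n"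
  unfolding D_iff by (elim conjE) blast

lemma DE_refl: "q \<in> D_set n \<Longrightarrow> 1 \<le> x \<Longrightarrow> x \<le> n \<Longrightarrow> (x,x)\<in>q"
  unfolding D_iff by (elim conjE) blast

lemma DE_trans: "q \<in> D_set n \<Longrightarrow> (x,y)\<in>q \<Longrightarrow> (y,z)\<in>q \<Longrightarrow> (x,z)\<in>q"
  unfolding D_iff by (elim conjE) blast

lemma DE_anti: "q \<in> D_set n \<Longrightarrow> (x,y)\<in>q \<Longrightarrow> (y,x)\<in>q \<Longrightarrow> x = y"
  unfolding D_iff by (elim conjE) blast

lemma DE_tot: "q \<in> D_set n \<Longrightarrow> 1 \<le> x \<Longrightarrow> x \<le> n \<Longrightarrow> 1 \<le> y \<Longrightarrow> y \<le> n \<Longrightarrow> x \<noteq> y \<Longrightarrow> (x,y)\<in>q \<or> (y,x)\<in>q"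
  unfolding D_iff by (elim conjE) blast

lemma DE_c: "q \<in> D_set n \<Longrightarrow> 1 \<le> i \<Longrightarrow> i < j \<Longrightarrow> j < k \<Longrightarrow> k \<le> n \<Longrightarrow>
        \<not> ((j,i)\<in>q \<and> (k,i)\<in>q) \<and> \<not> ((k,i)\<in>q \<and> (k,j)\<in>q)"
  unfolding D_iff by (elim conjE) blast

lemma DI:
  assumes sub: "\<And>x y. (x,y)\<in>q \<Longrightarrow> 1 \<le> x \<and> x \<le> n \<and> 1 \<le> y \<and> y \<le> n"
    and rf: "\<And>x. 1 \<le> x \<Longrightarrow> x \<le> n \<Longrightarrow> (x,x)\<in>q"
    and tr: "\<And>x y z. (x,y)\<in>q \<Longrightarrow> (y,z)\<in>q \<Longrightarrow> (x,z)\<in>q"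
    and an: "\<And>x y. (x,y)\<in>q \<Longrightarrow> (y,x)\<in>q \<Longrightarrow> x = y"
    and to: "\<And>x y. 1 \<le> x \<Longrightarrow> x \<le> n \<Longrightarrow> 1 \<le> y \<Longrightarrow> y \<le> n \<Longrightarrow> x \<noteq> y \<Longrightarrow> (x,y)\<in>q \<or> (y,x)\<in>q"
    and c: "\<And>i j k. 1 \<le> i \<Longrightarrow> i < j \<Longrightarrow> j < k \<Longrightarrow> k \<le> n \<Longrightarrow>
        \<not> ((j,i)\<in>q \<and> (k,i)\<in>q) \<and> \<not> ((k,i)\<in>q \<and> (k,j)\<in>q)"
  shows "q \<in> D_set n"
proof -
  have 1: "\<forall>x y. (x,y)\<in>q \<longrightarrow> 1 \<le> x \<and> x \<le> n \<and> 1 \<le> y \<and> y \<le> n" using sub by blast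
  have 2: "\<forall>x. 1 \<le> x \<and> x \<le> n \<longrightarrow> (x,x)\<in>q" using rf by blast
  have 3: "\<forall>x y z. (x,y)\<in>q \<longrightarrow> (y,z)\<in>q \<longrightarrow> (x,z)\<in>q" using tr by blast
  have 4: "\<forall>x y. (x,y)\<in>q \<longrightarrow> (y,x)\<in>q \<longrightarrow> x = y" using an by blast
  have 5: "\<forall>x y. 1 \<le> x \<and> x \<le> n \<longrightarrow> 1 \<le> y \<and> y \<le> n \<longrightarrow> x \<noteq> y \<longrightarrow> (x,y)\<in>q \<or> (y,x)\<in>q"
    using to by blast
  have 6: "\<forall>i j k. 1 \<le> i \<and> i < j \<and> j < k \<and> k \<le> n \<longrightarrow>
        \<not> ((j,i)\<in>q \<and> (k,i)\<in>q) \<and> \<not> ((k,i)\<in>q \<and> (k,j)\<in>q)"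
    using c by blast
  show ?thesis unfolding D_iff using 1 2 3 4 5 6 by (intro conjI)
qed

definition e1 :: "nat \<Rightarrow> (nat \<times> nat) set \<Rightarrow> (nat \<times> nat) set" where
  "e1 m q = q \<union> {1..Suc (Suc m)} \<times> {Suc (Suc m)}"

definition e2 :: "nat \<Rightarrow> (nat \<times> nat) set \<Rightarrow> (nat \<times> nat) set" where
  "e2 m q = q \<union> insert (Suc (Suc m)) {1..m} \<times> {Suc (Suc m)} \<union> {1..Suc (Suc m)} \<times> {Suc m}"

lemma e1_mem: "(x,y) \<in> e1 m q \<longleftrightarrow> (x,y) \<in> q \<or> (y = Suc (Suc m) \<and> 1 \<le> x \<and> x \<le> Suc (Suc m))"
  unfolding e1_def by auto

lemma e2_mem: "(x,y) \<in> e2 m q \<longleftrightarrow> (x,y) \<in> q \<or> (y = Suc (Suc m) \<and> (x = Suc (Suc m) \<or> 1 \<le> x \<and> x \<le> m))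
     \<or> (y = Suc m \<and> 1 \<le> x \<and> x \<le> Suc (Suc m))"
  unfolding e2_def by auto

lemma L1: assumes a: "q \<in> D_set (Suc m)" shows "e1 m q \<in> D_set (Suc (Suc m))"
proof (rule DI)
  note qs = DE_sub[OF a] and tr = DE_trans[OF a] and an = DE_anti[OF a] and to = DE_tot[OF a]
    and rf = DE_refl[OF a] and c = DE_c[OF a]
  note Q = e1_mem[of _ _ m q]
  show "1 \<le> x \<and> x \<le> Suc (Suc m) \<and> 1 \<le> y \<and> y \<le> Suc (Suc m)" if "(x,y) \<in> e1 m q" for x y
    using that Q[of x y] qs[of x y] by auto
  show "(x,x) \<in> e1 m q" if "1 \<le> x" "x \<le> Suc (Suc m)" for x
    using that Q[of x x] rf[of x] by (cases "x = Suc (Suc m)") auto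
  show "(x, z) \<in> e1 m q" if 1: "(x, y) \<in> e1 m q" and 2: "(y, z) \<in> e1 m q" for x y z
  proof (cases "z = Suc (Suc m)")
    case True
    have "1 \<le> x \<and> x \<le> Suc (Suc m)" using 1 Q[of x y] qs[of x y] by auto
    then show ?thesis using True Q[of x z] by simp
  next
    case False
    then have yz: "(y,z) \<in> q" using 2 Q[of y z] by simp
    then have "y \<noteq> Suc (Suc m)" using qs[of y z] by simp
    then have "(x,y) \<in> q" using 1 Q[of x y] by simp
    then show ?thesis using yz tr[of x y z] Q[of x z] by simp
  qed
  show "x = y" if 1: "(x, y) \<in> e1 m q" and 2: "(y, x) \<in> e1 m q" for x y
  proof (cases "x = Suc (Suc m) \<or> y = Suc (Suc m)")
    case True
    then show ?thesis using 1 2 Q[of x y] Q[of y x] qs[of x y] qs[of y x] by auto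
  next
    case False
    then show ?thesis using 1 2 Q[of x y] Q[of y x] an[of x y] by simp
  qed
  show "(x, y) \<in> e1 m q \<or> (y, x) \<in> e1 m q"
    if "1 \<le> x" "x \<le> Suc (Suc m)" "1 \<le> y" "y \<le> Suc (Suc m)" "x \<noteq> y" for x y
    using that Q[of x y] Q[of y x] to[of x y] by auto
  show "\<not> ((j, i) \<in> e1 m q \<and> (k, i) \<in> e1 m q) \<and> \<not> ((k, i) \<in> e1 m q \<and> (k, j) \<in> e1 m q)"
    if h: "1 \<le> i" "i < j" "j < k" "k \<le> Suc (Suc m)" for i j k
  proof (cases "k = Suc (Suc m)")
    case True
    then show ?thesis using h Q[of j i] Q[of k i] Q[of k j] qs[of k i] by auto
  next
    case False
    then have "k \<le> Suc m" using h by simp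
    then show ?thesis using h Q[of j i] Q[of k i] Q[of k j] c[of i j k] by auto
  qed
qed

lemma L2: assumes a: "q \<in> D_set m" shows "e2 m q \<in> D_set (Suc (Suc m))"
proof (rule DI)
  note qs = DE_sub[OF a] and tr = DE_trans[OF a] and an = DE_anti[OF a] and to = DE_tot[OF a]
    and rf = DE_refl[OF a] and c = DE_c[OF a]
  note Q = e2_mem[of _ _ m q]
  show "1 \<le> x \<and> x \<le> Suc (Suc m) \<and> 1 \<le> y \<and> y \<le> Suc (Suc m)" if "(x,y) \<in> e2 m q" for x y
    using that Q[of x y] qs[of x y] by auto
  show "(x,x) \<in> e2 m q" if "1 \<le> x" "x \<le> Suc (Suc m)" for x
    using that Q[of x x] rf[of x] by (auto simp: le_Suc_eq)
  show "(x, z) \<in> e2 m q" if 1: "(x, y) \<in> e2 m q" and 2: "(y, z) \<in> e2 m q" for x y z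
  proof -
    have bx: "1 \<le> x \<and> x \<le> Suc (Suc m)" using 1 Q[of x y] qs[of x y] by auto
    consider "z = Suc m" | "z = Suc (Suc m)" | "z \<noteq> Suc m" "z \<noteq> Suc (Suc m)" by blast
    then show ?thesis
    proof cases
      case 1 then show ?thesis using bx Q[of x z] by simp
    next
      case 2
      have "y = Suc (Suc m) \<or> (1 \<le> y \<and> y \<le> m)" using \<open>(y,z) \<in> e2 m q\<close> 2 Q[of y z] qs[of y z] by auto
      then have "x = Suc (Suc m) \<or> (1 \<le> x \<and> x \<le> m)"
      proof
        assume "y = Suc (Suc m)" then show ?thesis using \<open>(x,y) \<in> e2 m q\<close> Q[of x y] qs[of x y] by auto
      next
        assume "1 \<le> y \<and> y \<le> m" then show ?thesis using \<open>(x,y) \<in> e2 m q\<close> Q[of x y] qs[of x y] by auto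
      qed
      then show ?thesis using 2 Q[of x z] by simp
    next
      case 3
      then have yz: "(y,z) \<in> q" using \<open>(y,z) \<in> e2 m q\<close> Q[of y z] by simp
      then have "y \<noteq> Suc (Suc m)" "y \<noteq> Suc m" using qs[of y z] by auto
      then have "(x,y) \<in> q" using \<open>(x,y) \<in> e2 m q\<close> Q[of x y] by simp
      then show ?thesis using yz tr[of x y z] Q[of x z] by simp
    qed
  qed
  show "x = y" if 1: "(x, y) \<in> e2 m q" and 2: "(y, x) \<in> e2 m q" for x y
  proof (cases "x \<in> {Suc m, Suc (Suc m)} \<or> y \<in> {Suc m, Suc (Suc m)}")
    case True
    then show ?thesis using 1 2 Q[of x y] Q[of y x] qs[of x y] qs[of y x] by auto
  next
    case False
    then show ?thesis using 1 2 Q[of x y] Q[of y x] an[of x y] by simp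
  qed
  show "(x, y) \<in> e2 m q \<or> (y, x) \<in> e2 m q"
    if "1 \<le> x" "x \<le> Suc (Suc m)" "1 \<le> y" "y \<le> Suc (Suc m)" "x \<noteq> y" for x y
  proof (cases "x \<in> {Suc m, Suc (Suc m)} \<or> y \<in> {Suc m, Suc (Suc m)}")
    case True
    then show ?thesis using that Q[of x y] Q[of y x] by auto
  next
    case False
    then have "x \<le> m" "y \<le> m" using that by auto
    then show ?thesis using that Q[of x y] Q[of y x] to[of x y] by simp
  qed
  show "\<not> ((j, i) \<in> e2 m q \<and> (k, i) \<in> e2 m q) \<and> \<not> ((k, i) \<in> e2 m q \<and> (k, j) \<in> e2 m q)"
    if h: "1 \<le> i" "i < j" "j < k" "k \<le> Suc (Suc m)" for i j k
  proof -
    consider "k = Suc (Suc m)" | "k = Suc m" | "k \<le> m" using h by linarith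
    then show ?thesis
    proof cases
      case 1 then show ?thesis using h Q[of j i] Q[of k i] Q[of k j] qs[of k i] qs[of k j] by auto
    next
      case 2 then show ?thesis using h Q[of k i] qs[of k i] by auto
    next
      case 3 then show ?thesis using h Q[of j i] Q[of k i] Q[of k j] c[of i j k] by auto
    qed
  qed
qed

lemma L3: assumes a: "q \<in> D_set (Suc (Suc m))" shows "q \<in> e1 m ` D_set (Suc m) \<union> e2 m ` D_set m"
proof -
  note qs = DE_sub[OF a] and tr = DE_trans[OF a] and an = DE_anti[OF a] and to = DE_tot[OF a]
    and rf = DE_refl[OF a] and c = DE_c[OF a]
  show ?thesis
  proof (cases "\<forall>b. 1 \<le> b \<and> b \<le> Suc (Suc m) \<longrightarrow> (b, Suc (Suc m)) \<in> q")
    case True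
    define r where "r = q \<inter> {1..Suc m} \<times> {1..Suc m}"
    have R: "(x,y) \<in> r \<longleftrightarrow> (x,y) \<in> q \<and> 1 \<le> x \<and> x \<le> Suc m \<and> 1 \<le> y \<and> y \<le> Suc m" for x y
      unfolding r_def by auto
    have "q = e1 m r"
    proof (rule set_eqI)
      fix p :: "nat \<times> nat" obtain x y where xy: "p = (x,y)" by force
      have "(x,y) \<in> q \<longleftrightarrow> (x,y) \<in> e1 m r"
        unfolding e1_mem R using True[rule_format, of x] True[rule_format, of y] qs[of x y] an[of x y]
          an[of y x] by (auto simp: le_Suc_eq)
      then show "p \<in> q \<longleftrightarrow> p \<in> e1 m r" using xy by simp
    qed
    moreover have "r \<in> D_set (Suc m)"
    proof (rule DI)
      show "1 \<le> x \<and> x \<le> Suc m \<and> 1 \<le> y \<and> y \<le> Suc m" if "(x,y) \<in> r" for x y using that R by blast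
      show "(x,x) \<in> r" if "1 \<le> x" "x \<le> Suc m" for x using that R rf[of x] by simp
      show "(x, z) \<in> r" if "(x, y) \<in> r" "(y, z) \<in> r" for x y z using that R tr[of x y z] by blast
      show "x = y" if "(x, y) \<in> r" "(y, x) \<in> r" for x y using that R an[of x y] by blast
      show "(x, y) \<in> r \<or> (y, x) \<in> r" if "1 \<le> x" "x \<le> Suc m" "1 \<le> y" "y \<le> Suc m" "x \<noteq> y" for x y
        using that R[of x y] R[of y x] to[of x y] by simp
      show "\<not> ((j, i) \<in> r \<and> (k, i) \<in> r) \<and> \<not> ((k, i) \<in> r \<and> (k, j) \<in> r)"
        if "1 \<le> i" "i < j" "j < k" "k \<le> Suc m" for i j k
        using that R c[of i j k] by simp
    qed
    ultimately show ?thesis by blast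
  next
    case False
    then obtain b where b: "1 \<le> b" "b \<le> Suc (Suc m)" "(b, Suc (Suc m)) \<notin> q" by blast
    have key: "\<And>b. 1 \<le> b \<Longrightarrow> b \<le> m \<Longrightarrow> (b, Suc (Suc m)) \<in> q"
    proof (rule ccontr)
      fix b assume b1: "1 \<le> b" "b \<le> m" and nb: "(b, Suc (Suc m)) \<notin> q"
      have "(Suc (Suc m), b) \<in> q" using to[of b "Suc (Suc m)"] b1 nb by auto
      then have "(Suc m, b) \<notin> q" "(Suc (Suc m), Suc m) \<notin> q"
        using c[of b "Suc m" "Suc (Suc m)"] b1 by auto
      then have "(b, Suc m) \<in> q" "(Suc m, Suc (Suc m)) \<in> q"
        using to[of b "Suc m"] to[of "Suc m" "Suc (Suc m)"] b1 by auto
      then show False using tr nb by blast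
    qed
    have bM: "b = Suc m" using key b rf by (metis le_Suc_eq)
    have NM: "(Suc (Suc m), Suc m) \<in> q" using to[of "Suc m" "Suc (Suc m)"] b bM by auto
    have keyM: "\<And>b. 1 \<le> b \<Longrightarrow> b \<le> Suc (Suc m) \<Longrightarrow> (b, Suc m) \<in> q"
      using key NM tr rf by (metis le_Suc_eq)
    define r where "r = q \<inter> {1..m} \<times> {1..m}"
    have R: "(x,y) \<in> r \<longleftrightarrow> (x,y) \<in> q \<and> 1 \<le> x \<and> x \<le> m \<and> 1 \<le> y \<and> y \<le> m" for x y
      unfolding r_def by auto
    have "q = e2 m r"
    proof (rule set_eqI)
      fix p :: "nat \<times> nat" obtain x y where xy: "p = (x,y)" by force
      have "(x,y) \<in> q \<longleftrightarrow> (x,y) \<in> e2 m r"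
      proof
        assume xyq: "(x,y) \<in> q"
        have "y = Suc m \<or> (y = Suc (Suc m) \<and> x \<noteq> Suc m) \<or> (x \<le> m \<and> y \<le> m)"
        proof (rule ccontr)
          assume h: "\<not> ?thesis"
          have "x \<le> Suc (Suc m)" "y \<le> Suc (Suc m)" "1 \<le> x" "1 \<le> y" using qs[OF xyq] by auto
          then consider "y = Suc (Suc m)" "x = Suc m" | "y \<noteq> Suc m" "y \<noteq> Suc (Suc m)" "x = Suc m"
            | "y \<noteq> Suc m" "y \<noteq> Suc (Suc m)" "x = Suc (Suc m)"
            using h by linarith
          then show False
          proof cases
            case 1 then show ?thesis using NM an[of "Suc m" "Suc (Suc m)"] xyq by auto
          next
            case 2 then show ?thesis using keyM[of y] an[of x y] xyq qs[OF xyq] by auto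
          next
            case 3 then show ?thesis using key[of y] an[of x y] xyq qs[OF xyq] by (auto simp: le_Suc_eq)
          qed
        qed
        then show "(x,y) \<in> e2 m r" unfolding e2_mem R using qs[OF xyq] xyq by auto
      next
        assume "(x,y) \<in> e2 m r"
        then show "(x,y) \<in> q" unfolding e2_mem R using key[of x] keyM[of x] rf by auto
      qed
      then show "p \<in> q \<longleftrightarrow> p \<in> e2 m r" using xy by simp
    qed
    moreover have "r \<in> D_set m"
    proof (rule DI)
      show "1 \<le> x \<and> x \<le> m \<and> 1 \<le> y \<and> y \<le> m" if "(x,y) \<in> r" for x y using that R by blast
      show "(x,x) \<in> r" if "1 \<le> x" "x \<le> m" for x using that R rf[of x] by simp
      show "(x, z) \<in> r" if "(x, y) \<in> r" "(y, z) \<in> r" for x y z using that R tr[of x y z] by blast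
      show "x = y" if "(x, y) \<in> r" "(y, x) \<in> r" for x y using that R an[of x y] by blast
      show "(x, y) \<in> r \<or> (y, x) \<in> r" if "1 \<le> x" "x \<le> m" "1 \<le> y" "y \<le> m" "x \<noteq> y" for x y
        using that R[of x y] R[of y x] to[of x y] by simp
      show "\<not> ((j, i) \<in> r \<and> (k, i) \<in> r) \<and> \<not> ((k, i) \<in> r \<and> (k, j) \<in> r)"
        if "1 \<le> i" "i < j" "j < k" "k \<le> m" for i j k
        using that R c[of i j k] by simp
    qed
    ultimately show ?thesis by blast
  qed
qed

lemma fin: "finite (D_set n)"
proof -
  have "D_set n \<subseteq> Pow ({1..n} \<times> {1..n})"
  proof
    fix q assume q: "q \<in> D_set n"
    show "q \<in> Pow ({1..n} \<times> {1..n})" using DE_sub[OF q] by fastforce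
  qed
  then show ?thesis by (rule finite_subset) auto
qed

lemma D0: "D_set 0 = {{}}"
proof
  show "D_set 0 \<subseteq> {{}}"
  proof
    fix q assume q: "q \<in> D_set 0"
    show "q \<in> {{}}" using DE_sub[OF q] by fastforce
  qed
  show "{{}} \<subseteq> D_set 0" by (auto intro!: DI)
qed

lemma D1: "D_set (Suc 0) = {{(1,1)}}"
proof
  show "D_set (Suc 0) \<subseteq> {{(1,1)}}"
  proof
    fix q assume q: "q \<in> D_set (Suc 0)"
    have "q = {(1,1)}" using DE_sub[OF q] DE_refl[OF q, of 1] by fastforce
    then show "q \<in> {{(1,1)}}" by simp
  qed
  show "{{(1,1)}} \<subseteq> D_set (Suc 0)" by (auto intro!: DI)
qed

lemma DSS: "D_set (Suc (Suc m)) = e1 m ` D_set (Suc m) \<union> e2 m ` D_set m"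
  using L1 L2 L3 by blast

lemma inj1: "inj_on (e1 m) (D_set (Suc m))"
proof (rule inj_onI)
  fix x y assume x: "x \<in> D_set (Suc m)" and y: "y \<in> D_set (Suc m)" and e: "e1 m x = e1 m y"
  have "e1 m q \<inter> {1..Suc m} \<times> {1..Suc m} = q" if q: "q \<in> D_set (Suc m)" for q
    using DE_sub[OF q] unfolding e1_def by fastforce
  then show "x = y" using x y e by metis
qed

lemma inj2: "inj_on (e2 m) (D_set m)"
proof (rule inj_onI)
  fix x y assume x: "x \<in> D_set m" and y: "y \<in> D_set m" and e: "e2 m x = e2 m y"
  have "e2 m q \<inter> {1..m} \<times> {1..m} = q" if q: "q \<in> D_set m" for q
    using DE_sub[OF q] unfolding e2_def by fastforce
  then show "x = y" using x y e by metis
qed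

lemma disj: "e1 m ` D_set (Suc m) \<inter> e2 m ` D_set m = {}"
proof -
  have "(Suc (Suc m), Suc m) \<notin> e1 m q" if q: "q \<in> D_set (Suc m)" for q
    using DE_sub[OF q, of "Suc (Suc m)" "Suc m"] unfolding e1_mem by auto
  moreover have "\<And>q. (Suc (Suc m), Suc m) \<in> e2 m q" unfolding e2_mem by auto
  ultimately show ?thesis by blast
qed

lemma card_D: "card (D_set n) = fib (n + 1)"
proof (induction n rule: fib.induct)
  case 1 then show ?case by (simp add: D0)
next
  case 2 then show ?case by (simp add: D1)
next
  case (3 m)
  have "card (D_set (Suc (Suc m))) = card (e1 m ` D_set (Suc m)) + card (e2 m ` D_set m)"
    unfolding DSS by (rule card_Un_disjoint) (use fin disj in auto)
  also have "\<dots> = card (D_set (Suc m)) + card (D_set m)"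
    using card_image[OF inj1] card_image[OF inj2] by simp
  finally show ?case using 3 by simp
qed

theorem proposition3:
  fixes n :: nat
  assumes "n \<ge> 1"
  shows "card (D_set n) = fib (n + 1)"
  by (rule card_D)

end
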